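(* Fix any vector of nodal storage capacities $Q^{\rm s}=(Q^{\rm s}_1,\dots,Q^{\rm s}_I)\ge 0$ and consider the lower-level stochastic Cournot game described in the context. At any Nash equilibrium of this game, for every node $i$, every time $t\in\{1,\dots,N_{\rm T}\}$ and every scenario $w\in\{1,\dots,N_{\rm w}\}$, the charge level $q^{\rm ch}_{itw}$ and discharge level $q^{\rm dis}_{itw}$ of the storage firm at node $i$ are not simultaneously positive; i.e. each storage firm is either in charge mode or in discharge mode (or idle).
   Context: Market model. There are $I$ nodes, time periods $t\in\{1,\dots,N_{\rm T}\}$ of length $\Delta>0$, and wind scenarios $w\in\{1,\dots,N_{\rm w}\}$ with probabilities $\Psi_w>0$. Node $i$ hosts a set $\mathcal N^{\rm cg}_i$ of classical generators, a set $\mathcal N^{\rm wg}_i$ of wind generators and one storage firm; $\mathcal N_i$ is the set of neighbouring nodes of $i$, and each pair of neighbouring nodes $i,j$ is linked by a transmission firm. The price at node $i$, time $t$, scenario $w$ is $P_{itw}=\alpha_{it}\exp\!\big(-\beta_{it}\big(q^{\rm s}_{itw}+\sum_{m\in\mathcal N^{\rm wg}_i}q^{\rm wg}_{mitw}+\sum_{n\in\mathcal N^{\rm cg}_i}q^{\rm cg}_{nitw}+\sum_{j\in\mathcal N_i}q^{\rm tr}_{ijtw}\big)\big)$ with $\alpha_{it},\beta_{it}>0$. Firms (each chooses its variables for all $t,w$ simultaneously): (1) Wind generator $m$ at node $i$: maximizes $\sum_w\Psi_w\sum_t P_{itw}q^{\rm wg}_{mitw}$ subject to $0\le q^{\rm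 wg}_{mitw}\le Q^{\rm wg}_{mitw}$ (given available wind capacities). (2) Storage firm at node $i$: chooses $q^{\rm dis}_{itw},q^{\rm ch}_{itw}\ge0$ and $q^{\rm s}_{itw}$ to maximize $\sum_w\Psi_w\sum_t\big[P_{itw}q^{\rm s}_{itw}-c^{\rm s}_i(q^{\rm dis}_{itw}+q^{\rm ch}_{itw})-\gamma^{\rm s}_i\big(P_{itw}q^{\rm s}_{itw}+P_{itw}/\beta_{it}\big)\big]$ subject to, for all $t,w$: $q^{\rm s}_{itw}=\eta^{\rm dis}_i q^{\rm dis}_{itw}-q^{\rm ch}_{itw}/\eta^{\rm ch}_i$; $q^{\rm dis}_{itw}\le\zeta^{\rm dis}_iQ^{\rm s}_i$; $q^{\rm ch}_{itw}\le\zeta^{\rm ch}_iQ^{\rm s}_i$; $0\le\sum_{k=1}^t(q^{\rm ch}_{ikw}-q^{\rm dis}_{ikw})\Delta\le Q^{\rm s}_i$. Here $c^{\rm s}_i>0$ is the unit operation cost, $\eta^{\rm ch}_i,\eta^{\rm dis}_i\in(0,1]$ are charging/discharging efficiencies, $\zeta^{\rm ch}_i,\zeta^{\rm dis}_i>0$, and $\gamma^{\rm s}_i\in\{0,1\}$ ($0$: strategic, $1$: regulated). (3) Classical generator $n$ at node $i$: maximizes $\sum_w\Psi_w\sum_t(P_{itw}-c^{\rm cg}_{ni})q^{\rm cg}_{nitw}$ subject to $0\le q^{\rm cg}_{nitw}\le Q^{\rm cg}_{ni}$, $q^{\rm cg}_{nitw}-q^{\rm cg}_{ni(t-1)w}\le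 R^{\rm up}_{ni}$, $q^{\rm cg}_{ni(t-1)w}-q^{\rm cg}_{nitw}\le R^{\rm dn}_{ni}$. (4) Transmission firm between neighbouring nodes $i,j$: chooses $q^{\rm tr}_{ijtw},q^{\rm tr}_{jitw}$ to maximize $\sum_w\Psi_w\sum_t\big[(1-\gamma^{\rm tr}_{ij})(P_{jtw}q^{\rm tr}_{jitw}+P_{itw}q^{\rm tr}_{ijtw})+\gamma^{\rm tr}_{ij}(-P_{jtw}/\beta_{jt}-P_{itw}/\beta_{it})\big]$ subject to $q^{\rm tr}_{ijtw}=-q^{\rm tr}_{jitw}$ and $-Q^{\rm tr}_{ij}\le q^{\rm tr}_{ijtw}\le Q^{\rm tr}_{ij}$, with $\gamma^{\rm tr}_{ij}\in\{0,1\}$. A Nash equilibrium is a profile of all firms' strategies in which each firm's strategy is optimal for its problem given the other firms' strategies. *)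

theory Defs
  imports Complex_Main
begin

text \<open>Times range over {1..NT}, scenarios over {1..NW}. A wind (classical) generator
  is identified by the pair (m, i) with m \<in> WG i (n \<in> CG i).\<close>

record market =
  Nodes :: "nat set"
  NT :: nat
  NW :: nat
  Delta :: real
  Psi :: "nat \<Rightarrow> real"
  alpha :: "nat \<Rightarrow> nat \<Rightarrow> real"
  beta :: "nat \<Rightarrow> nat \<Rightarrow> real"
  CG :: "nat \<Rightarrow> nat set"
  WG :: "nat \<Rightarrow> nat set"
  Nb :: "nat \<Rightarrow> nat set"
  Qwg :: "nat \<Rightarrow> nat \<Rightarrow> nat \<Rightarrow> nat \<Rightarrow> real"
  Qs :: "nat \<Rightarrow> real"
  cs :: "nat \<Rightarrow> real"
  eta_ch :: "nat \<Rightarrow> real"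
  eta_dis :: "nat \<Rightarrow> real"
  zeta_ch :: "nat \<Rightarrow> real"
  zeta_dis :: "nat \<Rightarrow> real"
  gamma_s :: "nat \<Rightarrow> real"
  ccg :: "nat \<Rightarrow> nat \<Rightarrow> real"
  Qcg :: "nat \<Rightarrow> nat \<Rightarrow> real"
  Rup :: "nat \<Rightarrow> nat \<Rightarrow> real"
  Rdn :: "nat \<Rightarrow> nat \<Rightarrow> real"
  gamma_tr :: "nat \<Rightarrow> nat \<Rightarrow> real"
  Qtr :: "nat \<Rightarrow> nat \<Rightarrow> real"

definition valid_market :: "market \<Rightarrow> bool" where
  "valid_market M \<longleftrightarrow>
     finite (Nodes M) \<and>
     (\<forall>i\<in>Nodes M. finite (CG M i) \<and> finite (WG M i) \<and> Nb M i \<subseteq> Nodes M \<and> i \<notin> Nb M i) \<and>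
     (\<forall>i\<in>Nodes M. \<forall>j\<in>Nb M i. i \<in> Nb M j \<and>
         gamma_tr M i j = gamma_tr M j i \<and> Qtr M i j = Qtr M j i \<and>
         (gamma_tr M i j = 0 \<or> gamma_tr M i j = 1)) \<and>
     Delta M > 0 \<and>
     (\<forall>w\<in>{1..NW M}. Psi M w > 0) \<and>
     (\<forall>i\<in>Nodes M. \<forall>t\<in>{1..NT M}. alpha M i t > 0 \<and> beta M i t > 0) \<and>
     (\<forall>i\<in>Nodes M. Qs M i \<ge> 0 \<and> cs M i > 0 \<and>
         0 < eta_ch M i \<and> eta_ch M i \<le> 1 \<and> 0 < eta_dis M i \<and> eta_dis M i \<le> 1 \<and>
         zeta_ch M i > 0 \<and> zeta_dis M i > 0 \<and>
         (gamma_s M i = 0 \<or> gamma_s M i = 1))"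

record profile =
  qwg :: "nat \<Rightarrow> nat \<Rightarrow> nat \<Rightarrow> nat \<Rightarrow> real"  \<comment> \<open>m i t w\<close>
  qcg :: "nat \<Rightarrow> nat \<Rightarrow> nat \<Rightarrow> nat \<Rightarrow> real"  \<comment> \<open>n i t w\<close>
  qs :: "nat \<Rightarrow> nat \<Rightarrow> nat \<Rightarrow> real"           \<comment> \<open>i t w\<close>
  qdis :: "nat \<Rightarrow> nat \<Rightarrow> nat \<Rightarrow> real"
  qch :: "nat \<Rightarrow> nat \<Rightarrow> nat \<Rightarrow> real"
  qtr :: "nat \<Rightarrow> nat \<Rightarrow> nat \<Rightarrow> nat \<Rightarrow> real"  \<comment> \<open>i j t w\<close>

definition price :: "market \<Rightarrow> profile \<Rightarrow> nat \<Rightarrow> nat \<Rightarrow> nat \<Rightarrow> real" where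
  "price M p i t w = alpha M i t * exp (- beta M i t *
      (qs p i t w + (\<Sum>m\<in>WG M i. qwg p m i t w) + (\<Sum>n\<in>CG M i. qcg p n i t w)
       + (\<Sum>j\<in>Nb M i. qtr p i j t w)))"

definition expect :: "market \<Rightarrow> (nat \<Rightarrow> nat \<Rightarrow> real) \<Rightarrow> real" where
  "expect M f = (\<Sum>w\<in>{1..NW M}. Psi M w * (\<Sum>t\<in>{1..NT M}. f t w))"

definition wind_profit :: "market \<Rightarrow> profile \<Rightarrow> nat \<Rightarrow> nat \<Rightarrow> real" where
  "wind_profit M p m i = expect M (\<lambda>t w. price M p i t w * qwg p m i t w)"

definition storage_profit :: "market \<Rightarrow> profile \<Rightarrow> nat \<Rightarrow> real" where
  "storage_profit M p i = expect M (\<lambda>t w.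
      price M p i t w * qs p i t w - cs M i * (qdis p i t w + qch p i t w)
      - gamma_s M i * (price M p i t w * qs p i t w + price M p i t w / beta M i t))"

definition cg_profit :: "market \<Rightarrow> profile \<Rightarrow> nat \<Rightarrow> nat \<Rightarrow> real" where
  "cg_profit M p n i = expect M (\<lambda>t w. (price M p i t w - ccg M n i) * qcg p n i t w)"

definition tr_profit :: "market \<Rightarrow> profile \<Rightarrow> nat \<Rightarrow> nat \<Rightarrow> real" where
  "tr_profit M p i j = expect M (\<lambda>t w.
      (1 - gamma_tr M i j) * (price M p j t w * qtr p j i t w + price M p i t w * qtr p i j t w)
      + gamma_tr M i j * (- price M p j t w / beta M j t - price M p i t w / beta M i t))"

definition wind_feas :: "market \<Rightarrow> nat \<Rightarrow> nat \<Rightarrow> (nat \<Rightarrow> nat \<Rightarrow> real) \<Rightarrow> bool" where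
  "wind_feas M m i f \<longleftrightarrow> (\<forall>t\<in>{1..NT M}. \<forall>w\<in>{1..NW M}. 0 \<le> f t w \<and> f t w \<le> Qwg M m i t w)"

definition storage_feas :: "market \<Rightarrow> nat \<Rightarrow> (nat \<Rightarrow> nat \<Rightarrow> real) \<Rightarrow> (nat \<Rightarrow> nat \<Rightarrow> real)
    \<Rightarrow> (nat \<Rightarrow> nat \<Rightarrow> real) \<Rightarrow> bool" where
  "storage_feas M i s dis ch \<longleftrightarrow> (\<forall>t\<in>{1..NT M}. \<forall>w\<in>{1..NW M}.
      0 \<le> dis t w \<and> 0 \<le> ch t w \<and>
      s t w = eta_dis M i * dis t w - ch t w / eta_ch M i \<and>
      dis t w \<le> zeta_dis M i * Qs M i \<and> ch t w \<le> zeta_ch M i * Qs M i \<and>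
      0 \<le> (\<Sum>k\<in>{1..t}. (ch k w - dis k w) * Delta M) \<and>
      (\<Sum>k\<in>{1..t}. (ch k w - dis k w) * Delta M) \<le> Qs M i)"

text \<open>Ramping constraints are imposed for t \<ge> 2 (no initial output is given).\<close>
definition cg_feas :: "market \<Rightarrow> nat \<Rightarrow> nat \<Rightarrow> (nat \<Rightarrow> nat \<Rightarrow> real) \<Rightarrow> bool" where
  "cg_feas M n i f \<longleftrightarrow> (\<forall>t\<in>{1..NT M}. \<forall>w\<in>{1..NW M}.
      0 \<le> f t w \<and> f t w \<le> Qcg M n i \<and>
      (2 \<le> t \<longrightarrow> f t w - f (t - 1) w \<le> Rup M n i \<and> f (t - 1) w - f t w \<le> Rdn M n i))"

definition tr_feas :: "market \<Rightarrow> nat \<Rightarrow> nat \<Rightarrow> (nat \<Rightarrow> nat \<Rightarrow> real) \<Rightarrow> (nat \<Rightarrow> nat \<Rightarrow> real) \<Rightarrow> bool" where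
  "tr_feas M i j f g \<longleftrightarrow> (\<forall>t\<in>{1..NT M}. \<forall>w\<in>{1..NW M}.
      f t w = - g t w \<and> - Qtr M i j \<le> f t w \<and> f t w \<le> Qtr M i j)"

definition upd_wind :: "profile \<Rightarrow> nat \<Rightarrow> nat \<Rightarrow> (nat \<Rightarrow> nat \<Rightarrow> real) \<Rightarrow> profile" where
  "upd_wind p m i f = p\<lparr>qwg := (\<lambda>m' i'. if m' = m \<and> i' = i then f else qwg p m' i')\<rparr>"

definition upd_cg :: "profile \<Rightarrow> nat \<Rightarrow> nat \<Rightarrow> (nat \<Rightarrow> nat \<Rightarrow> real) \<Rightarrow> profile" where
  "upd_cg p n i f = p\<lparr>qcg := (\<lambda>n' i'. if n' = n \<and> i' = i then f else qcg p n' i')\<rparr>"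

definition upd_storage :: "profile \<Rightarrow> nat \<Rightarrow> (nat \<Rightarrow> nat \<Rightarrow> real) \<Rightarrow> (nat \<Rightarrow> nat \<Rightarrow> real)
    \<Rightarrow> (nat \<Rightarrow> nat \<Rightarrow> real) \<Rightarrow> profile" where
  "upd_storage p i s dis ch = p\<lparr>qs := (qs p)(i := s), qdis := (qdis p)(i := dis), qch := (qch p)(i := ch)\<rparr>"

definition upd_tr :: "profile \<Rightarrow> nat \<Rightarrow> nat \<Rightarrow> (nat \<Rightarrow> nat \<Rightarrow> real) \<Rightarrow> (nat \<Rightarrow> nat \<Rightarrow> real) \<Rightarrow> profile" where
  "upd_tr p i j f g = p\<lparr>qtr := (\<lambda>a b. if a = i \<and> b = j then f else if a = j \<and> b = i then g else qtr p a b)\<rparr>"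

definition nash_equilibrium :: "market \<Rightarrow> profile \<Rightarrow> bool" where
  "nash_equilibrium M p \<longleftrightarrow>
    (\<forall>i\<in>Nodes M. \<forall>m\<in>WG M i. wind_feas M m i (qwg p m i) \<and>
        (\<forall>f. wind_feas M m i f \<longrightarrow> wind_profit M (upd_wind p m i f) m i \<le> wind_profit M p m i)) \<and>
    (\<forall>i\<in>Nodes M. storage_feas M i (qs p i) (qdis p i) (qch p i) \<and>
        (\<forall>s dis ch. storage_feas M i s dis ch \<longrightarrow>
            storage_profit M (upd_storage p i s dis ch) i \<le> storage_profit M p i)) \<and>
    (\<forall>i\<in>Nodes M. \<forall>n\<in>CG M i. cg_feas M n i (qcg p n i) \<and>
        (\<forall>f. cg_feas M n i f \<longrightarrow> cg_profit M (upd_cg p n i f) n i \<le> cg_profit M p n i)) \<and>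
    (\<forall>i\<in>Nodes M. \<forall>j\<in>Nb M i. tr_feas M i j (qtr p i j) (qtr p j i) \<and>
        (\<forall>f g. tr_feas M i j f g \<longrightarrow> tr_profit M (upd_tr p i j f g) i j \<le> tr_profit M p i j))"

end

theory Submission
  imports Defs
begin

lemma F_deriv:
  fixes al be X q E dd cc D C c g :: real
  assumes "be > 0"
  shows "((\<lambda>a. al * exp (- be * (X - a * E)) * (q - a * E) - c * ((dd - a * D) + (cc - a * C))
      - g * (al * exp (- be * (X - a * E)) * (q - a * E) + al * exp (- be * (X - a * E)) / be))
     has_real_derivative
      ((1 - g) * (al * exp (- be * X)) * E * (be * q - 1) - g * (al * exp (- be * X)) * E + c * (D + C))) (at 0)"
  using assms by (auto intro!: derivative_eq_intros simp: algebra_simps)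

definition Gd :: "market \<Rightarrow> profile \<Rightarrow> nat \<Rightarrow> (nat \<Rightarrow> nat \<Rightarrow> real) \<Rightarrow> (nat \<Rightarrow> nat \<Rightarrow> real) \<Rightarrow> nat \<Rightarrow> nat \<Rightarrow> real" where
  "Gd M p i D C t w = (1 - gamma_s M i) * price M p i t w * (eta_dis M i * D t w - C t w / eta_ch M i) * (beta M i t * qs p i t w - 1)
     - gamma_s M i * price M p i t w * (eta_dis M i * D t w - C t w / eta_ch M i) + cs M i * (D t w + C t w)"

lemma key:
  fixes D C :: "nat \<Rightarrow> nat \<Rightarrow> real"
  assumes vm: "valid_market M" and ne: "nash_equilibrium M p" and i: "i \<in> Nodes M"
    and d: "d > 0"
    and feas: "\<And>a. 0 < a \<Longrightarrow> a < d \<Longrightarrow> storage_feas M i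
        (\<lambda>t w. qs p i t w - a * (eta_dis M i * D t w - C t w / eta_ch M i))
        (\<lambda>t w. qdis p i t w - a * D t w) (\<lambda>t w. qch p i t w - a * C t w)"
    and pos: "0 < (\<Sum>w\<in>{1..NW M}. Psi M w * (\<Sum>t\<in>{1..NT M}. Gd M p i D C t w))"
  shows False
proof -
  define E where "E t w = eta_dis M i * D t w - C t w / eta_ch M i" for t w
  define X where "X t w = qs p i t w + (\<Sum>m\<in>WG M i. qwg p m i t w) + (\<Sum>n\<in>CG M i. qcg p n i t w)
       + (\<Sum>j\<in>Nb M i. qtr p i j t w)" for t w
  define F where "F t w a = alpha M i t * exp (- beta M i t * (X t w - a * E t w)) * (qs p i t w - a * E t w)
      - cs M i * ((qdis p i t w - a * D t w) + (qch p i t w - a * C t w))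
      - gamma_s M i * (alpha M i t * exp (- beta M i t * (X t w - a * E t w)) * (qs p i t w - a * E t w)
         + alpha M i t * exp (- beta M i t * (X t w - a * E t w)) / beta M i t)" for t w a
  define \<Phi> where "\<Phi> a = storage_profit M (upd_storage p i
        (\<lambda>t w. qs p i t w - a * E t w)
        (\<lambda>t w. qdis p i t w - a * D t w) (\<lambda>t w. qch p i t w - a * C t w)) i" for a
  have Phi_eq: "\<Phi> a = (\<Sum>w\<in>{1..NW M}. Psi M w * (\<Sum>t\<in>{1..NT M}. F t w a))" for a
    unfolding \<Phi>_def storage_profit_def expect_def F_def
    by (simp add: upd_storage_def price_def X_def algebra_simps)
  have Phi0: "\<Phi> 0 = storage_profit M p i"
    unfolding \<Phi>_def by (simp add: upd_storage_def)
  have beta_pos: "\<And>t. t \<in> {1..NT M} \<Longrightarrow> beta M i t > 0"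
    using vm i unfolding valid_market_def by auto
  have "((\<lambda>a. \<Sum>w\<in>{1..NW M}. Psi M w * (\<Sum>t\<in>{1..NT M}. F t w a)) has_real_derivative
        (\<Sum>w\<in>{1..NW M}. Psi M w * (\<Sum>t\<in>{1..NT M}. Gd M p i D C t w))) (at 0)"
  proof (intro DERIV_sum DERIV_cmult)
    fix w t assume t: "t \<in> {1..NT M}"
    have pe: "price M p i t w = alpha M i t * exp (- beta M i t * X t w)"
      by (simp add: price_def X_def)
    show "((\<lambda>a. F t w a) has_real_derivative Gd M p i D C t w) (at 0)"
      unfolding F_def Gd_def pe E_def[symmetric]
      by (rule F_deriv) (use beta_pos t in auto)
  qed
  then have der: "(\<Phi> has_real_derivative (\<Sum>w\<in>{1..NW M}. Psi M w * (\<Sum>t\<in>{1..NT M}. Gd M p i D C t w))) (at 0)"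
    by (simp add: Phi_eq[abs_def])
  obtain d' where d': "d' > 0" "\<And>h. h > 0 \<Longrightarrow> h < d' \<Longrightarrow> \<Phi> 0 < \<Phi> (0 + h)"
    using DERIV_pos_inc_right[OF der pos] by blast
  define h where "h = min d d' / 2"
  have h: "h > 0" "h < d" "h < d'" using d d' unfolding h_def by auto
  have "\<Phi> 0 < \<Phi> h" using d'(2)[OF h(1) h(3)] by simp
  moreover have "\<Phi> h \<le> storage_profit M p i"
    using ne i feas[OF h(1) h(2)] unfolding nash_equilibrium_def \<Phi>_def E_def by blast
  ultimately show False using Phi0 by simp
qed
lemma sum_shift:
  fixes ch dis C D :: "nat \<Rightarrow> real"
  shows "(\<Sum>k\<in>A. ((ch k - a * C k) - (dis k - a * D k)) * De) =
     (\<Sum>k\<in>A. (ch k - dis k) * De) + a * De * (\<Sum>k\<in>A. (D k - C k))"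
  by (simp add: sum.distrib sum_distrib_left sum_subtractf algebra_simps)

lemma feas_dev:
  fixes D C :: "nat \<Rightarrow> nat \<Rightarrow> real"
  assumes sf: "storage_feas M i s dis ch"
    and ec: "eta_ch M i \<noteq> 0"
    and a: "a \<ge> 0"
    and Dn: "\<And>t w. 0 \<le> D t w" and Cn: "\<And>t w. 0 \<le> C t w"
    and Db: "\<And>t w. t \<in> {1..NT M} \<Longrightarrow> w \<in> {1..NW M} \<Longrightarrow> a * D t w \<le> dis t w"
    and Cb: "\<And>t w. t \<in> {1..NT M} \<Longrightarrow> w \<in> {1..NW M} \<Longrightarrow> a * C t w \<le> ch t w"
    and lev: "\<And>t w. t \<in> {1..NT M} \<Longrightarrow> w \<in> {1..NW M} \<Longrightarrow>
        0 \<le> (\<Sum>k\<in>{1..t}. (ch k w - dis k w) * Delta M) + a * Delta M * (\<Sum>k\<in>{1..t}. (D k w - C k w)) \<and>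
        (\<Sum>k\<in>{1..t}. (ch k w - dis k w) * Delta M) + a * Delta M * (\<Sum>k\<in>{1..t}. (D k w - C k w)) \<le> Qs M i"
  shows "storage_feas M i (\<lambda>t w. s t w - a * (eta_dis M i * D t w - C t w / eta_ch M i))
        (\<lambda>t w. dis t w - a * D t w) (\<lambda>t w. ch t w - a * C t w)"
  unfolding storage_feas_def
proof (intro ballI conjI)
  fix t w assume t: "t \<in> {1..NT M}" and w: "w \<in> {1..NW M}"
  have f: "0 \<le> dis t w \<and> 0 \<le> ch t w \<and>
      s t w = eta_dis M i * dis t w - ch t w / eta_ch M i \<and>
      dis t w \<le> zeta_dis M i * Qs M i \<and> ch t w \<le> zeta_ch M i * Qs M i"
    using sf t w unfolding storage_feas_def by blast
  have aD: "0 \<le> a * D t w" "0 \<le> a * C t w" using a Dn Cn by auto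
  show "0 \<le> dis t w - a * D t w" using Db[OF t w] by simp
  show "0 \<le> ch t w - a * C t w" using Cb[OF t w] by simp
  show "s t w - a * (eta_dis M i * D t w - C t w / eta_ch M i) =
        eta_dis M i * (dis t w - a * D t w) - (ch t w - a * C t w) / eta_ch M i"
    using f ec by (simp add: field_simps)
  show "dis t w - a * D t w \<le> zeta_dis M i * Qs M i" using f aD by linarith
  show "ch t w - a * C t w \<le> zeta_ch M i * Qs M i" using f aD by linarith
  show "0 \<le> (\<Sum>k\<in>{1..t}. (ch k w - a * C k w - (dis k w - a * D k w)) * Delta M)"
    using lev[OF t w] unfolding sum_shift by linarith
  show "(\<Sum>k\<in>{1..t}. (ch k w - a * C k w - (dis k w - a * D k w)) * Delta M) \<le> Qs M i"
    using lev[OF t w] unfolding sum_shift by linarith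
qed

lemma pos_sum:
  assumes vm: "valid_market M" and t0: "t0 \<in> {1..NT M}" and w0: "w0 \<in> {1..NW M}"
    and nn: "\<And>t w. t \<in> {1..NT M} \<Longrightarrow> w \<in> {1..NW M} \<Longrightarrow> 0 \<le> G t w"
    and p: "0 < G t0 w0"
  shows "0 < (\<Sum>w\<in>{1..NW M}. Psi M w * (\<Sum>t\<in>{1..NT M}. G t w))"
proof -
  have psi: "\<And>w. w \<in> {1..NW M} \<Longrightarrow> Psi M w > 0" using vm unfolding valid_market_def by auto
  have "0 < (\<Sum>t\<in>{1..NT M}. G t w0)"
    by (rule sum_pos2[where i=t0 and f="\<lambda>t. G t w0"]) (use nn w0 t0 p in auto)
  then have pw: "0 < Psi M w0 * (\<Sum>t\<in>{1..NT M}. G t w0)" using psi[OF w0] by simp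
  show ?thesis
    by (rule sum_pos2[where i=w0 and f="\<lambda>w. Psi M w * (\<Sum>t\<in>{1..NT M}. G t w)"]) (use nn psi w0 pw in \<open>auto intro!: mult_nonneg_nonneg sum_nonneg simp: less_imp_le\<close>)
qed

lemma finite_min:
  fixes f :: "nat \<Rightarrow> real"
  assumes "finite T" "\<forall>t\<in>T. 0 < f t"
  shows "\<exists>m>0. \<forall>t\<in>T. m \<le> f t"
  using assms
proof (induction T rule: finite_induct)
  case empty then show ?case by (intro exI[of _ 1]) auto
next
  case (insert x F)
  then obtain m where "m > 0" "\<forall>t\<in>F. m \<le> f t" by auto
  then show ?case using insert by (intro exI[of _ "min m (f x)"]) auto
qed
lemma sum_ind:
  fixes t t0 w w0 :: nat and c :: real
  assumes "1 \<le> t0"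
  shows "(\<Sum>k\<in>{1..t}. if w = w0 \<and> k = t0 then (c::real) else 0) = (if w = w0 \<and> t0 \<le> t then c else 0)"
  using assms by (cases "w = w0") (auto simp: sum.delta sum.delta')

theorem proposition1:
  assumes "valid_market M"
    and "nash_equilibrium M p"
  shows "\<forall>i\<in>Nodes M. \<forall>t\<in>{1..NT M}. \<forall>w\<in>{1..NW M}.
           \<not> (qch p i t w > 0 \<and> qdis p i t w > 0)"
proof (intro ballI notI)
  fix i t0 w0
  assume i: "i \<in> Nodes M" and t0: "t0 \<in> {1..NT M}" and w0: "w0 \<in> {1..NW M}"
    and both: "0 < qch p i t0 w0 \<and> 0 < qdis p i t0 w0"
  note vm = assms(1) and ne = assms(2)
  have sf: "storage_feas M i (qs p i) (qdis p i) (qch p i)"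
    using ne i unfolding nash_equilibrium_def by blast
  have Qn: "Qs M i \<ge> 0" and csp: "cs M i > 0" and ec: "0 < eta_ch M i" "eta_ch M i \<le> 1"
    and ed: "0 < eta_dis M i" "eta_dis M i \<le> 1" and gam: "gamma_s M i = 0 \<or> gamma_s M i = 1"
    and De: "Delta M > 0"
    using vm i unfolding valid_market_def by auto
  have ab: "\<And>t. t \<in> {1..NT M} \<Longrightarrow> alpha M i t > 0 \<and> beta M i t > 0"
    using vm i unfolding valid_market_def by auto
  have Ppos: "\<And>t w. t \<in> {1..NT M} \<Longrightarrow> price M p i t w > 0"
    using ab unfolding price_def by auto
  have sfp: "\<And>t w. t \<in> {1..NT M} \<Longrightarrow> w \<in> {1..NW M} \<Longrightarrow>
      0 \<le> qdis p i t w \<and> 0 \<le> qch p i t w \<and>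
      qs p i t w = eta_dis M i * qdis p i t w - qch p i t w / eta_ch M i \<and>
      0 \<le> (\<Sum>k\<in>{1..t}. (qch p i k w - qdis p i k w) * Delta M) \<and>
      (\<Sum>k\<in>{1..t}. (qch p i k w - qdis p i k w) * Delta M) \<le> Qs M i"
    using sf unfolding storage_feas_def by blast
  define L where "L t = (\<Sum>k\<in>{1..t}. (qch p i k w0 - qdis p i k w0) * Delta M)" for t
  have Lr: "\<And>t. t \<in> {1..NT M} \<Longrightarrow> 0 \<le> L t \<and> L t \<le> Qs M i"
    using sfp w0 unfolding L_def by blast
  have LSuc: "L (Suc n) = L n + (qch p i (Suc n) w0 - qdis p i (Suc n) w0) * Delta M" for n
    unfolding L_def by simp
  define q where "q = qs p i t0 w0"
  have qeq: "q = eta_dis M i * qdis p i t0 w0 - qch p i t0 w0 / eta_ch M i"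
    using sfp[OF t0 w0] unfolding q_def by blast
  have t01: "1 \<le> t0" using t0 by simp
  define I0 where "I0 = (\<lambda>t w. if w = w0 \<and> t = t0 then (1::real) else 0)"
  have I0n: "\<And>t w. 0 \<le> I0 t w" unfolding I0_def by simp
  have I0b: "\<And>t w a. t \<in> {1..NT M} \<Longrightarrow> w \<in> {1..NW M} \<Longrightarrow> a \<le> qdis p i t0 w0 \<Longrightarrow> a * I0 t w \<le> qdis p i t w"
    using sfp unfolding I0_def by auto
  show False
  proof (cases "\<forall>t\<in>{t0..NT M}. L t < Qs M i")
    case True
    obtain m where m: "m > 0" "\<forall>t\<in>{t0..NT M}. m \<le> Qs M i - L t"
      using finite_min[of "{t0..NT M}" "\<lambda>t. Qs M i - L t"] True by auto
    define r where "r = eta_ch M i * eta_dis M i"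
    have r: "0 < r" "r \<le> 1" using ec ed unfolding r_def by (auto intro: mult_le_one)
    define C where "C = (\<lambda>t w. r * I0 t w)"
    define d where "d = min (min (qdis p i t0 w0) (qch p i t0 w0 / r)) (m / Delta M)"
    have d: "d > 0" using both r m De unfolding d_def by auto
    show False
    proof (rule key[OF vm ne i d, of I0 C])
      fix a :: real assume a: "0 < a" "a < d"
      show "storage_feas M i (\<lambda>t w. qs p i t w - a * (eta_dis M i * I0 t w - C t w / eta_ch M i))
          (\<lambda>t w. qdis p i t w - a * I0 t w) (\<lambda>t w. qch p i t w - a * C t w)"
      proof (rule feas_dev[OF sf])
        show "eta_ch M i \<noteq> 0" using ec by simp
        show "0 \<le> a" using a by simp
        show "\<And>t w. 0 \<le> I0 t w" by (rule I0n)
        show "\<And>t w. 0 \<le> C t w" using r I0n unfolding C_def by simp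
        show "\<And>t w. t \<in> {1..NT M} \<Longrightarrow> w \<in> {1..NW M} \<Longrightarrow> a * I0 t w \<le> qdis p i t w"
          using I0b a unfolding d_def by auto
        fix t w assume t: "t \<in> {1..NT M}" and w: "w \<in> {1..NW M}"
        have "a * r \<le> qch p i t0 w0"
          using a r unfolding d_def by (auto simp: field_simps)
        then show "a * C t w \<le> qch p i t w"
          using sfp[OF t w] unfolding C_def I0_def by (auto simp: mult.commute)
        have S: "(\<Sum>k\<in>{1..t}. (I0 k w - C k w)) = (if w = w0 \<and> t0 \<le> t then 1 - r else 0)"
          unfolding C_def I0_def using sum_ind[OF t01, where t=t and w=w and w0=w0 and c="1 - r"]
          by (simp add: if_distrib cong: if_cong)
        have am: "a * Delta M \<le> m" using a De unfolding d_def by (auto simp: field_simps)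
        show "0 \<le> (\<Sum>k\<in>{1..t}. (qch p i k w - qdis p i k w) * Delta M) + a * Delta M * (\<Sum>k\<in>{1..t}. (I0 k w - C k w)) \<and>
          (\<Sum>k\<in>{1..t}. (qch p i k w - qdis p i k w) * Delta M) + a * Delta M * (\<Sum>k\<in>{1..t}. (I0 k w - C k w)) \<le> Qs M i"
        proof (cases "w = w0 \<and> t0 \<le> t")
          case True
          have tt: "t \<in> {t0..NT M}" using True t by auto
          have "a * Delta M * (1 - r) \<le> a * Delta M" using a De r by (simp add: mult_left_le)
          moreover have "0 \<le> a * Delta M * (1 - r)" using a De r by simp
          moreover have "m \<le> Qs M i - L t" using m(2) tt by blast
          ultimately show ?thesis using S True am Lr[OF t] unfolding L_def by auto
        next
          case False
          then have "(\<Sum>k\<in>{1..t}. (I0 k w - C k w)) = 0" using S False by auto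
          then show ?thesis using sfp[OF t w] by simp
        qed
      qed
    next
      show "0 < (\<Sum>w\<in>{1..NW M}. Psi M w * (\<Sum>t\<in>{1..NT M}. Gd M p i I0 C t w))"
      proof (rule pos_sum[OF vm t0 w0])
        fix t w show "0 \<le> Gd M p i I0 C t w"
          using csp r ec unfolding Gd_def C_def I0_def r_def by auto
      next
        show "0 < Gd M p i I0 C t0 w0"
          using csp r ec unfolding Gd_def C_def I0_def r_def
          by (simp add: field_simps add_pos_pos mult_pos_pos)
      qed
    qed
  next
    case notB: False
    show False
    proof (cases "gamma_s M i = 1 \<or> beta M i t0 * q \<le> 1")
      case A: True
      define d where "d = min (qdis p i t0 w0) (qch p i t0 w0)"
      have d: "d > 0" using both unfolding d_def by auto
      show False
      proof (rule key[OF vm ne i d, of I0 I0])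
        fix a :: real assume a: "0 < a" "a < d"
        show "storage_feas M i (\<lambda>t w. qs p i t w - a * (eta_dis M i * I0 t w - I0 t w / eta_ch M i))
            (\<lambda>t w. qdis p i t w - a * I0 t w) (\<lambda>t w. qch p i t w - a * I0 t w)"
        proof (rule feas_dev[OF sf])
          show "eta_ch M i \<noteq> 0" using ec by simp
          show "0 \<le> a" using a by simp
          show "\<And>t w. 0 \<le> I0 t w" by (rule I0n)
          show "\<And>t w. 0 \<le> I0 t w" by (rule I0n)
          show "\<And>t w. t \<in> {1..NT M} \<Longrightarrow> w \<in> {1..NW M} \<Longrightarrow> a * I0 t w \<le> qdis p i t w"
            using I0b a unfolding d_def by auto
          show "\<And>t w. t \<in> {1..NT M} \<Longrightarrow> w \<in> {1..NW M} \<Longrightarrow> a * I0 t w \<le> qch p i t w"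
            using sfp a unfolding d_def I0_def by auto
          fix t w assume t: "t \<in> {1..NT M}" and w: "w \<in> {1..NW M}"
          show "0 \<le> (\<Sum>k\<in>{1..t}. (qch p i k w - qdis p i k w) * Delta M) + a * Delta M * (\<Sum>k\<in>{1..t}. (I0 k w - I0 k w)) \<and>
            (\<Sum>k\<in>{1..t}. (qch p i k w - qdis p i k w) * Delta M) + a * Delta M * (\<Sum>k\<in>{1..t}. (I0 k w - I0 k w)) \<le> Qs M i"
            using sfp[OF t w] by simp
        qed
      next
        have Gpos: "0 < Gd M p i I0 I0 t0 w0"
        proof -
        define P where "P = price M p i t0 w0"
        define E where "E = eta_dis M i - 1 / eta_ch M i"
        have P: "P > 0" using Ppos t0 unfolding P_def by simp
        have E: "E \<le> 0" using ec ed unfolding E_def by (simp add: field_simps mult_le_one)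
        have G: "Gd M p i I0 I0 t0 w0 = (1 - gamma_s M i) * P * E * (beta M i t0 * q - 1)
            - gamma_s M i * P * E + cs M i * 2"
          unfolding Gd_def I0_def P_def E_def q_def by simp
        have 1: "0 \<le> (1 - gamma_s M i) * P * E * (beta M i t0 * q - 1)"
        proof (cases "gamma_s M i = 1")
          case True then show ?thesis by simp
        next
          case False
          then have "beta M i t0 * q \<le> 1" using A by simp
          then have "0 \<le> E * (beta M i t0 * q - 1)" using E by (simp add: mult_nonpos_nonpos)
          moreover have "0 \<le> (1 - gamma_s M i) * P" using gam P False by simp
          ultimately show ?thesis by (metis mult.assoc mult_nonneg_nonneg)
        qed
        have 2: "0 \<le> - gamma_s M i * P * E" using gam P E by (auto simp: mult_nonneg_nonpos)
    show ?thesis using G 1 2 csp by linarith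
        qed
        show "0 < (\<Sum>w\<in>{1..NW M}. Psi M w * (\<Sum>t\<in>{1..NT M}. Gd M p i I0 I0 t w))"
        proof (rule pos_sum[OF vm t0 w0])
          fix t w show "0 \<le> Gd M p i I0 I0 t w"
          proof (cases "w = w0 \<and> t = t0")
            case True
            then show ?thesis using Gpos by simp
          next
            case False
            then show ?thesis unfolding Gd_def I0_def by auto
          qed
        next
          show "0 < Gd M p i I0 I0 t0 w0" by (rule Gpos)
        qed
      qed
    next
      case notA: False
      have g0: "gamma_s M i = 0" using notA gam by auto
      have bq: "beta M i t0 * q > 1" using notA by auto
      have b0: "beta M i t0 > 0" using ab t0 by auto
      have qpos: "q > 0"
      proof (rule ccontr)
        assume "\<not> q > 0" then have "beta M i t0 * q \<le> 0" using b0 by (simp add: mult_nonneg_nonpos)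
        then show False using bq by simp
      qed
      have chdis: "qch p i t0 w0 < qdis p i t0 w0"
      proof -
        have "qch p i t0 w0 \<le> qch p i t0 w0 / eta_ch M i" using ec both by (simp add: field_simps mult_le_cancel_left1)
        moreover have "eta_dis M i * qdis p i t0 w0 \<le> qdis p i t0 w0" using ed both by (simp add: mult_le_cancel_right1)
        ultimately show ?thesis using qpos qeq by linarith
      qed
      have Lt0: "L t0 < Qs M i"
      proof -
        obtain n where n: "t0 = Suc n" using t01 by (cases t0) auto
        have "L n \<le> Qs M i"
        proof (cases "n = 0")
          case True then show ?thesis using Qn unfolding L_def by simp
        next
          case False then have "n \<in> {1..NT M}" using n t0 by auto
          then show ?thesis using Lr by blast
        qed
        moreover have "(qch p i t0 w0 - qdis p i t0 w0) * Delta M < 0" using chdis De by (simp add: mult_neg_pos)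
        ultimately show ?thesis using LSuc[of n] n by simp
      qed
      have exj: "\<exists>j. j \<in> {t0..NT M} \<and> L j = Qs M i"
      proof -
        obtain j where j: "j \<in> {t0..NT M}" "\<not> L j < Qs M i" using notB by blast
        then have "j \<in> {1..NT M}" using t01 by auto
        then show ?thesis using j Lr by force
      qed
      define k where "k = (LEAST j. j \<in> {t0..NT M} \<and> L j = Qs M i)"
      have kP: "k \<in> {t0..NT M} \<and> L k = Qs M i"
        unfolding k_def using exj by (metis (mono_tags, lifting) LeastI)
      have kmin: "\<And>j. j \<in> {t0..NT M} \<Longrightarrow> j < k \<Longrightarrow> L j < Qs M i"
      proof -
        fix j assume j: "j \<in> {t0..NT M}" "j < k"
        have "\<not> (j \<in> {t0..NT M} \<and> L j = Qs M i)" using not_less_Least[OF j(2)[unfolded k_def]] .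
        moreover have "j \<in> {1..NT M}" using j t01 by auto
        ultimately show "L j < Qs M i" using j Lr by force
      qed
      have ktk: "t0 < k" using kP Lt0 by (metis atLeastAtMost_iff le_neq_implies_less order.strict_iff_not)
      have kr: "k \<in> {1..NT M}" using kP t01 by auto
      obtain k' where k': "k = Suc k'" using ktk by (cases k) auto
      have Lk': "L k' < Qs M i" using kmin[of k'] k' ktk kP by auto
      have chk: "qdis p i k w0 < qch p i k w0"
      proof -
        have "0 < (qch p i k w0 - qdis p i k w0) * Delta M" using LSuc[of k'] k' kP Lk' by simp
        then show ?thesis using De by (simp add: zero_less_mult_iff)
      qed
      have sfk: "0 \<le> qdis p i k w0" "qs p i k w0 = eta_dis M i * qdis p i k w0 - qch p i k w0 / eta_ch M i"
        using sfp[OF kr w0] by auto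
      have chkp: "qch p i k w0 > 0" using chk sfk by linarith
      have qk: "qs p i k w0 < 0"
      proof -
        have "qch p i k w0 \<le> qch p i k w0 / eta_ch M i" using ec chkp by (simp add: field_simps mult_le_cancel_left1)
        moreover have "eta_dis M i * qdis p i k w0 \<le> qdis p i k w0" using ed sfk(1) by (intro mult_left_le_one_le) auto
        ultimately show ?thesis using chk sfk by linarith
      qed
      obtain m where m: "m > 0" "\<forall>t\<in>{t0..<k}. m \<le> Qs M i - L t"
        using finite_min[of "{t0..<k}" "\<lambda>t. Qs M i - L t"] kmin kP by force
      define C where "C = (\<lambda>t w. if w = w0 \<and> t = k then (1::real) else 0)"
      define d where "d = min (min (qdis p i t0 w0) (qch p i k w0)) (m / Delta M)"
      have d: "d > 0" using both chkp m De unfolding d_def by auto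
      show False
      proof (rule key[OF vm ne i d, of I0 C])
        fix a :: real assume a: "0 < a" "a < d"
        show "storage_feas M i (\<lambda>t w. qs p i t w - a * (eta_dis M i * I0 t w - C t w / eta_ch M i))
            (\<lambda>t w. qdis p i t w - a * I0 t w) (\<lambda>t w. qch p i t w - a * C t w)"
        proof (rule feas_dev[OF sf])
          show "eta_ch M i \<noteq> 0" using ec by simp
          show "0 \<le> a" using a by simp
          show "\<And>t w. 0 \<le> I0 t w" by (rule I0n)
          show "\<And>t w. 0 \<le> C t w" unfolding C_def by simp
          show "\<And>t w. t \<in> {1..NT M} \<Longrightarrow> w \<in> {1..NW M} \<Longrightarrow> a * I0 t w \<le> qdis p i t w"
            using I0b a unfolding d_def by auto
          show "\<And>t w. t \<in> {1..NT M} \<Longrightarrow> w \<in> {1..NW M} \<Longrightarrow> a * C t w \<le> qch p i t w"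
            using sfp a unfolding d_def C_def by auto
          fix t w assume t: "t \<in> {1..NT M}" and w: "w \<in> {1..NW M}"
          have k1: "1 \<le> k" using kr by simp
          have S: "(\<Sum>k\<in>{1..t}. (I0 k w - C k w)) = (if w = w0 \<and> t0 \<le> t then 1 else 0) - (if w = w0 \<and> k \<le> t then 1 else 0)"
            unfolding C_def I0_def sum_subtractf
            using sum_ind[OF t01, where t=t and w=w and w0=w0 and c=1]
              sum_ind[OF k1, where t=t and w=w and w0=w0 and c=1] by simp
          have am: "a * Delta M \<le> m" using a De unfolding d_def by (auto simp: field_simps)
          show "0 \<le> (\<Sum>k\<in>{1..t}. (qch p i k w - qdis p i k w) * Delta M) + a * Delta M * (\<Sum>k\<in>{1..t}. (I0 k w - C k w)) \<and>
            (\<Sum>k\<in>{1..t}. (qch p i k w - qdis p i k w) * Delta M) + a * Delta M * (\<Sum>k\<in>{1..t}. (I0 k w - C k w)) \<le> Qs M i"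
          proof (cases "w = w0 \<and> t0 \<le> t \<and> t < k")
            case True
            have tt: "t \<in> {t0..<k}" using True by auto
            have S1: "(\<Sum>k\<in>{1..t}. (I0 k w - C k w)) = 1" using S True by auto
            have "m \<le> Qs M i - L t" using m(2) tt by blast
            moreover have "0 \<le> a * Delta M" using a De by simp
            ultimately show ?thesis using S1 True am Lr[OF t] unfolding L_def by auto
          next
            case False
            then have "(\<Sum>k\<in>{1..t}. (I0 k w - C k w)) = 0" using S ktk by auto
            then show ?thesis using sfp[OF t w] by simp
          qed
        qed
      next
        define P where "P = price M p i t0 w0"
        have P: "P > 0" using Ppos t0 unfolding P_def by simp
        have Gpos: "0 < Gd M p i I0 C t0 w0"
        proof -
          have G: "Gd M p i I0 C t0 w0 = P * eta_dis M i * (beta M i t0 * q - 1) + cs M i"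
            unfolding Gd_def I0_def C_def P_def q_def using g0 ktk by simp
          have "0 < P * eta_dis M i * (beta M i t0 * q - 1)" using P ed bq by simp
          then show ?thesis using G csp by linarith
        qed
        have Gk: "0 \<le> Gd M p i I0 C k w0"
        proof -
          define Pk where "Pk = price M p i k w0"
          have Pk: "Pk > 0" using Ppos kr unfolding Pk_def by simp
          have bk: "beta M i k > 0" using ab kr by auto
          have G: "Gd M p i I0 C k w0 = Pk * (1 - beta M i k * qs p i k w0) / eta_ch M i + cs M i"
            unfolding Gd_def I0_def C_def Pk_def using g0 ktk ec by (simp add: field_simps)
          have "beta M i k * qs p i k w0 < 0" using bk qk by (simp add: mult_pos_neg)
          then have "0 < Pk * (1 - beta M i k * qs p i k w0) / eta_ch M i" using Pk ec by simp
          then show ?thesis using G csp by linarith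
        qed
        show "0 < (\<Sum>w\<in>{1..NW M}. Psi M w * (\<Sum>t\<in>{1..NT M}. Gd M p i I0 C t w))"
        proof (rule pos_sum[OF vm t0 w0])
          fix t w show "0 \<le> Gd M p i I0 C t w"
          proof (cases "w = w0 \<and> (t = t0 \<or> t = k)")
            case True
            then show ?thesis using Gpos Gk by auto
          next
            case False
            then show ?thesis unfolding Gd_def I0_def C_def by auto
          qed
        next
          show "0 < Gd M p i I0 C t0 w0" by (rule Gpos)
        qed
      qed
    qed
  qed
qed
end
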